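(* Let $k\in\mathbb Z^+$, let $M$ be a matroid and let $N$ be a minor of $M$ such that $\mathcal T_k(N)$ is a tangle (of order $k$ on $N$). If $X\subseteq E(M)$ is contained in a $\mathcal T_k(M,N)$-small set, then there is a minor $M'$ of $M$ such that $M'|X=M|X$, $M'$ has $N$ as a minor, and $X$ is contained in a $\mathcal T_k(M',N)$-small set $X'$ such that $E(M')=E(N)\cup X'$ and $\lambda_{M'}(X')=\kappa_{\mathcal T_k(M',N)}(X)=\kappa_{\mathcal T_k(M,N)}(X)$.
   Context: For a matroid $M$ and $X\subseteq E(M)$, $\lambda_M(X)=r_M(X)+r_M(E(M)-X)-r(M)$; $X$ is $k$-separating if $\lambda_M(X)<k$. A collection $\mathcal T$ of subsets of $E(M)$ is a tangle of order $\theta$ if: (i) every set in $\mathcal T$ is $(\theta-1)$-separating, and for each $(\theta-1)$-separating set $X$, either $X\in\mathcal T$ or $E(M)-X\in\mathcal T$; (ii) no three sets in $\mathcal T$ have union $E(M)$; (iii) $E(M)-\{e\}\notin\mathcal T$ for each $e\in E(M)$. Sets in $\mathcal T$ are called $\mathcal T$-small. For a tangle $\mathcal T$ of order $\theta$ and $X\subseteq E(M)$, $\kappa_{\mathcal T}(X)=\theta-1$ if $X$ is contained in no $\mathcal T$-small set, and $\kappa_{\mathcal T}(X)=\min\{\lambda_M(Z): X\subseteq Z\in\mathcal T\}$ otherwise. $\mathcal T_k(N)$ is the collection of $(k-1)$-separating subsets of $E(N)$ that are neither spanning nor cospanning in $N$. If $N$ is a minor of $M$ and $\mathcal T_k(N)$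 is a tangle of order $k$ on $N$, then $\mathcal T_k(M,N)=\{X\subseteq E(M):\lambda_M(X)<k-1,\ X\cap E(N)\in\mathcal T_k(N)\}$, which is a tangle of order $k$ on $M$ (the tangle induced by $\mathcal T_k(N)$). *)

theory Defs
  imports Main
begin

text \<open>A matroid is given by its (finite) ground set and its rank function;
 only the values of the rank function on subsets of the ground set matter.\<close>

record 'a matroid =
  ground :: "'a set"
  rk :: "'a set \<Rightarrow> nat"

definition matroid :: "'a matroid \<Rightarrow> bool" where
  "matroid M \<longleftrightarrow> finite (ground M)
    \<and> (\<forall>X. X \<subseteq> ground M \<longrightarrow> rk M X \<le> card X)
    \<and> (\<forall>X Y. X \<subseteq> Y \<and> Y \<subseteq> ground M \<longrightarrow> rk M X \<le> rk M Y)
    \<and> (\<forall>X Y. X \<subseteq> ground M \<and> Y \<subseteq> ground M \<longrightarrow>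
          rk M (X \<union> Y) + rk M (X \<inter> Y) \<le> rk M X + rk M Y)"

definition is_minor :: "'a matroid \<Rightarrow> 'a matroid \<Rightarrow> bool" where
  "is_minor N M \<longleftrightarrow> (\<exists>C D. C \<subseteq> ground M \<and> D \<subseteq> ground M \<and> C \<inter> D = {}
     \<and> ground N = ground M - (C \<union> D)
     \<and> (\<forall>X. X \<subseteq> ground N \<longrightarrow> rk N X = rk M (X \<union> C) - rk M C))"

definition same_restriction :: "'a matroid \<Rightarrow> 'a matroid \<Rightarrow> 'a set \<Rightarrow> bool" where
  "same_restriction M' M X \<longleftrightarrow> X \<subseteq> ground M' \<and> X \<subseteq> ground M
     \<and> (\<forall>Y. Y \<subseteq> X \<longrightarrow> rk M' Y = rk M Y)"

definition conn :: "'a matroid \<Rightarrow> 'a set \<Rightarrow> nat" where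
  "conn M X = rk M X + rk M (ground M - X) - rk M (ground M)"

definition separating :: "'a matroid \<Rightarrow> nat \<Rightarrow> 'a set \<Rightarrow> bool" where
  "separating M k X \<longleftrightarrow> X \<subseteq> ground M \<and> conn M X < k"

definition spanning :: "'a matroid \<Rightarrow> 'a set \<Rightarrow> bool" where
  "spanning M X \<longleftrightarrow> rk M X = rk M (ground M)"

definition dual_rk :: "'a matroid \<Rightarrow> 'a set \<Rightarrow> nat" where
  "dual_rk M X = card X + rk M (ground M - X) - rk M (ground M)"

definition cospanning :: "'a matroid \<Rightarrow> 'a set \<Rightarrow> bool" where
  "cospanning M X \<longleftrightarrow> dual_rk M X = dual_rk M (ground M)"

definition tangle :: "'a matroid \<Rightarrow> nat \<Rightarrow> 'a set set \<Rightarrow> bool" where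
  "tangle M \<theta> T \<longleftrightarrow>
     (\<forall>X\<in>T. separating M (\<theta> - 1) X)
   \<and> (\<forall>X. separating M (\<theta> - 1) X \<longrightarrow> X \<in> T \<or> ground M - X \<in> T)
   \<and> (\<forall>A\<in>T. \<forall>B\<in>T. \<forall>C\<in>T. A \<union> B \<union> C \<noteq> ground M)
   \<and> (\<forall>e\<in>ground M. ground M - {e} \<notin> T)"

definition kappa :: "'a matroid \<Rightarrow> nat \<Rightarrow> 'a set set \<Rightarrow> 'a set \<Rightarrow> nat" where
  "kappa M \<theta> T X = (if \<not> (\<exists>Z\<in>T. X \<subseteq> Z) then \<theta> - 1
      else Min {conn M Z | Z. Z \<in> T \<and> X \<subseteq> Z})"

definition Tk :: "nat \<Rightarrow> 'a matroid \<Rightarrow> 'a set set" where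
  "Tk k N = {X. separating N (k - 1) X \<and> \<not> spanning N X \<and> \<not> cospanning N X}"

definition TkMN :: "nat \<Rightarrow> 'a matroid \<Rightarrow> 'a matroid \<Rightarrow> 'a set set" where
  "TkMN k M N = {X. X \<subseteq> ground M \<and> conn M X < k - 1 \<and> X \<inter> ground N \<in> Tk k N}"

end

theory Submission
  imports Defs
begin

lemma mE: assumes "matroid M"
  shows "finite (ground M)" "X \<subseteq> ground M \<Longrightarrow> rk M X \<le> card X"
    "X \<subseteq> Y \<Longrightarrow> Y \<subseteq> ground M \<Longrightarrow> rk M X \<le> rk M Y"
    "X \<subseteq> ground M \<Longrightarrow> Y \<subseteq> ground M \<Longrightarrow> rk M (X \<union> Y) + rk M (X \<inter> Y) \<le> rk M X + rk M Y"
  using assms unfolding matroid_def by blast+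

lemma rk_empty: "matroid M \<Longrightarrow> rk M {} = 0" using mE(2)[of M "{}"] by simp

lemma rk_un: "matroid M \<Longrightarrow> X \<subseteq> ground M \<Longrightarrow> Y \<subseteq> ground M \<Longrightarrow> rk M (X\<union>Y) \<le> rk M X + rk M Y"
  using mE(4)[of M X Y] by linarith

lemma rk_single: "matroid M \<Longrightarrow> e \<in> ground M \<Longrightarrow> rk M {e} \<le> 1" using mE(2)[of M "{e}"] by simp

lemma conn_eq: assumes "matroid M" "A \<subseteq> ground M"
  shows "conn M A + rk M (ground M) = rk M A + rk M (ground M - A)"
proof -
  have "A \<union> (ground M - A) = ground M" using assms(2) by blast
  then have "rk M (ground M) \<le> rk M A + rk M (ground M - A)"
    using rk_un[OF assms(1) assms(2), of "ground M - A"] by simp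
  thus ?thesis unfolding conn_def by simp
qed

lemma conn_submod: assumes M: "matroid M" and A: "A \<subseteq> ground M" and B: "B \<subseteq> ground M"
  shows "conn M (A \<union> B) + conn M (A \<inter> B) \<le> conn M A + conn M B"
proof -
  let ?E = "ground M"
  have s1: "rk M (A\<union>B) + rk M (A\<inter>B) \<le> rk M A + rk M B" using mE(4)[OF M A B] .
  have s2: "rk M ((?E-A)\<union>(?E-B)) + rk M ((?E-A)\<inter>(?E-B)) \<le> rk M (?E-A) + rk M (?E-B)"
    using mE(4)[OF M, of "?E-A" "?E-B"] by blast
  have e1: "(?E-A)\<union>(?E-B) = ?E - (A\<inter>B)" "(?E-A)\<inter>(?E-B) = ?E - (A\<union>B)" by blast+
  have c1: "conn M A + rk M ?E = rk M A + rk M (?E - A)" using conn_eq[OF M A] .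
  have c2: "conn M B + rk M ?E = rk M B + rk M (?E - B)" using conn_eq[OF M B] .
  have AB1: "A \<union> B \<subseteq> ?E" "A \<inter> B \<subseteq> ?E" using A B by blast+
  have c3: "conn M (A\<union>B) + rk M ?E = rk M (A\<union>B) + rk M (?E - (A\<union>B))" using conn_eq[OF M AB1(1)] .
  have c4: "conn M (A\<inter>B) + rk M ?E = rk M (A\<inter>B) + rk M (?E - (A\<inter>B))" using conn_eq[OF M AB1(2)] .
  have s3: "rk M (?E - (A\<inter>B)) + rk M (?E - (A\<union>B)) \<le> rk M (?E-A) + rk M (?E-B)"
    using s2 unfolding e1 .
  show ?thesis using s1 s3 c1 c2 c3 c4 by linarith
qed

lemma is_minorE:
  assumes "is_minor N M"
  obtains C D where "C \<subseteq> ground M" "D \<subseteq> ground M" "C \<inter> D = {}"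
    "ground N = ground M - (C \<union> D)"
    "\<And>Y. Y \<subseteq> ground N \<Longrightarrow> rk N Y = rk M (Y \<union> C) - rk M C"
proof -
  from assms obtain C D where h: "C \<subseteq> ground M \<and> D \<subseteq> ground M \<and> C \<inter> D = {}
     \<and> ground N = ground M - (C \<union> D)
     \<and> (\<forall>X. X \<subseteq> ground N \<longrightarrow> rk N X = rk M (X \<union> C) - rk M C)"
    unfolding is_minor_def by (elim exE) 
  show thesis apply (rule that[of C D]) using h by simp_all
qed

lemma is_minorI:
  assumes "C \<subseteq> ground M" "D \<subseteq> ground M" "C \<inter> D = {}"
    "ground N = ground M - (C \<union> D)"
    "\<And>Y. Y \<subseteq> ground N \<Longrightarrow> rk N Y = rk M (Y \<union> C) - rk M C"
  shows "is_minor N M"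
  unfolding is_minor_def using assms by blast

lemma conn_minor: assumes M: "matroid M" and mn: "is_minor N M" and A: "A \<subseteq> ground M"
  shows "conn N (A \<inter> ground N) \<le> conn M A"
proof -
  obtain C D where C: "C \<subseteq> ground M" and D: "D \<subseteq> ground M" and CD: "C \<inter> D = {}"
    and gN: "ground N = ground M - (C \<union> D)"
    and rN: "\<And>Y. Y \<subseteq> ground N \<Longrightarrow> rk N Y = rk M (Y \<union> C) - rk M C"
    apply (rule is_minorE[OF mn]) by blast
  let ?E = "ground M" let ?r = "rk M"
  define E' where "E' = ?E - D"
  define A' where "A' = A - D"
  define B' where "B' = ?E - A - D"
  define A1 where "A1 = A \<inter> ground N"
  have hA: "A1 \<union> C = A' \<union> C" using CD A unfolding A1_def A'_def gN by blast
  have hB: "(ground N - A1) \<union> C = B' \<union> C" using CD A C unfolding A1_def B'_def gN by blast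
  have hE: "ground N \<union> C = E'" using CD C unfolding E'_def gN by blast
  have mono1: "\<And>Y. Y \<subseteq> ?E \<Longrightarrow> ?r C \<le> ?r (Y \<union> C)"
  proof -
    fix Y assume "Y \<subseteq> ?E"
    then have "Y \<union> C \<subseteq> ?E" using C by blast
    then show "?r C \<le> ?r (Y \<union> C)" using mE(3)[OF M, of C "Y \<union> C"] by blast
  qed
  have A'E: "A' \<subseteq> ?E" using A unfolding A'_def by blast
  have rA: "rk N A1 + ?r C = ?r (A' \<union> C)"
    using rN[of A1] mono1[OF A'E] hA unfolding A1_def by auto
  have rB: "rk N (ground N - A1) + ?r C = ?r (B' \<union> C)"
  proof -
    have "B' \<subseteq> ?E" unfolding B'_def by blast
    then show ?thesis using rN[of "ground N - A1"] mono1[of B'] hB by simp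
  qed
  have rE: "rk N (ground N) + ?r C = ?r E'"
  proof -
    have "ground N \<subseteq> ?E" unfolding gN by blast
    then show ?thesis using rN[of "ground N"] mono1[of "ground N"] hE by simp
  qed
  have i1: "?r (A'\<union>C) + ?r (A'\<inter>C) \<le> ?r A' + ?r C" using mE(4)[OF M, of A' C] A C unfolding A'_def by blast
  have i2: "?r (B'\<union>C) + ?r (B'\<inter>C) \<le> ?r B' + ?r C" using mE(4)[OF M, of B' C] C unfolding B'_def by blast
  have i3: "?r C \<le> ?r (A'\<inter>C) + ?r (B'\<inter>C)"
  proof -
    have "C = (A'\<inter>C) \<union> (B'\<inter>C)" using C CD A unfolding A'_def B'_def by blast
    moreover have "A'\<inter>C \<subseteq> ?E" "B'\<inter>C \<subseteq> ?E" using C by blast+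
    ultimately show ?thesis using rk_un[OF M, of "A'\<inter>C" "B'\<inter>C"] by simp
  qed
  have d1: "?r A' + ?r (A \<union> E') \<le> ?r A + ?r E'"
  proof -
    have "A \<inter> E' = A'" "A \<union> E' \<subseteq> ?E" using A unfolding A'_def E'_def by blast+
    then show ?thesis using mE(4)[OF M, of A E'] A unfolding E'_def by auto
  qed
  have d2: "?r ?E + ?r B' \<le> ?r (A \<union> E') + ?r (?E - A)"
  proof -
    have "(A \<union> E') \<union> (?E - A) = ?E" "(A \<union> E') \<inter> (?E - A) = B'" "A \<union> E' \<subseteq> ?E"
      using A unfolding B'_def E'_def by blast+
    then show ?thesis using mE(4)[OF M, of "A \<union> E'" "?E - A"] by auto
  qed
  have cM: "conn M A + ?r ?E = ?r A + ?r (?E - A)" using conn_eq[OF M A] .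
  have "rk N A1 + rk N (ground N - A1) \<le> rk N (ground N) + conn M A"
    using rA rB rE i1 i2 i3 d1 d2 cM by linarith
  then show ?thesis unfolding conn_def A1_def by linarith
qed


definition contr :: "'a matroid \<Rightarrow> 'a \<Rightarrow> 'a matroid" where
  "contr M e = \<lparr>ground = ground M - {e}, rk = (\<lambda>Y. rk M (Y \<union> {e}) - rk M {e})\<rparr>"

definition del :: "'a matroid \<Rightarrow> 'a \<Rightarrow> 'a matroid" where
  "del M e = \<lparr>ground = ground M - {e}, rk = rk M\<rparr>"

lemma contr_simps: "ground (contr M e) = ground M - {e}" "rk (contr M e) Y = rk M (Y \<union> {e}) - rk M {e}"
  unfolding contr_def by simp_all

lemma del_simps: "ground (del M e) = ground M - {e}" "rk (del M e) = rk M"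
  unfolding del_def by simp_all

lemma matroid_contr: assumes M: "matroid M" and e: "e \<in> ground M"
  shows "matroid (contr M e)"
proof -
  have f: "finite (ground (contr M e))" using mE(1)[OF M] by (simp add: contr_simps)
  have c: "rk (contr M e) X \<le> card X" if X: "X \<subseteq> ground (contr M e)" for X
  proof -
    have X': "X \<subseteq> ground M" using X by (auto simp: contr_simps)
    have "rk M (X \<union> {e}) \<le> rk M X + rk M {e}" using rk_un[OF M X', of "{e}"] e by simp
    then show ?thesis using mE(2)[OF M X'] by (simp add: contr_simps)
  qed
  have m: "rk (contr M e) X \<le> rk (contr M e) Y" if "X \<subseteq> Y" "Y \<subseteq> ground (contr M e)" for X Y
  proof -
    have "rk M (X \<union> {e}) \<le> rk M (Y \<union> {e})" using mE(3)[OF M, of "X \<union> {e}" "Y \<union> {e}"] that e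
      by (auto simp: contr_simps)
    then show ?thesis by (simp add: contr_simps)
  qed
  have s: "rk (contr M e) (X \<union> Y) + rk (contr M e) (X \<inter> Y) \<le> rk (contr M e) X + rk (contr M e) Y"
    if X: "X \<subseteq> ground (contr M e)" and Y: "Y \<subseteq> ground (contr M e)" for X Y
  proof -
    have X': "X \<union> {e} \<subseteq> ground M" and Y': "Y \<union> {e} \<subseteq> ground M" using X Y e by (auto simp: contr_simps)
    have eq: "(X \<union> {e}) \<union> (Y \<union> {e}) = (X \<union> Y) \<union> {e}" "(X \<union> {e}) \<inter> (Y \<union> {e}) = (X \<inter> Y) \<union> {e}" by blast+
    have sm: "rk M ((X \<union> Y) \<union> {e}) + rk M ((X \<inter> Y) \<union> {e}) \<le> rk M (X \<union> {e}) + rk M (Y \<union> {e})"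
      using mE(4)[OF M X' Y'] unfolding eq .
    have m1: "rk M {e} \<le> rk M ((X \<inter> Y) \<union> {e})" using mE(3)[OF M, of "{e}" "(X \<inter> Y) \<union> {e}"] X' by blast
    have m2: "rk M ((X \<inter> Y) \<union> {e}) \<le> rk M ((X \<union> Y) \<union> {e})" using mE(3)[OF M, of "(X \<inter> Y) \<union> {e}" "(X \<union> Y) \<union> {e}"] X' Y' by blast
    have m3: "rk M {e} \<le> rk M (X \<union> {e})" using mE(3)[OF M, of "{e}" "X \<union> {e}"] X' by blast
    have m4: "rk M {e} \<le> rk M (Y \<union> {e})" using mE(3)[OF M, of "{e}" "Y \<union> {e}"] Y' by blast
    show ?thesis using sm m1 m2 m3 m4 by (simp add: contr_simps)
  qed
  show ?thesis unfolding matroid_def using f c m s by blast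
qed

lemma matroid_del: assumes M: "matroid M"
  shows "matroid (del M e)"
proof -
  have sub: "\<And>X. X \<subseteq> ground M - {e} \<Longrightarrow> X \<subseteq> ground M" by blast
  show ?thesis unfolding matroid_def del_simps
    using mE(1)[OF M] mE(2)[OF M sub] mE(3)[OF M _ sub] mE(4)[OF M sub sub] by blast
qed

lemma minor_contr: assumes M: "matroid M" and e: "e \<in> ground M" shows "is_minor (contr M e) M"
  by (rule is_minorI[of "{e}" M "{}"]) (use e in \<open>auto simp: contr_simps\<close>)

lemma minor_del: assumes M: "matroid M" and e: "e \<in> ground M" shows "is_minor (del M e) M"
  by (rule is_minorI[of "{}" M "{e}"]) (use e rk_empty[OF M] in \<open>auto simp: del_simps\<close>)

lemma minor_refl: assumes M: "matroid M" shows "is_minor M M"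
  by (rule is_minorI[of "{}" M "{}"]) (use rk_empty[OF M] in \<open>auto\<close>)

lemma minor_trans: assumes M: "matroid M" and m1: "is_minor M1 M" and m2: "is_minor M2 M1"
  shows "is_minor M2 M"
proof -
  obtain C1 D1 where C1: "C1 \<subseteq> ground M" and D1: "D1 \<subseteq> ground M" and CD1: "C1 \<inter> D1 = {}"
    and g1: "ground M1 = ground M - (C1 \<union> D1)"
    and r1: "\<And>Y. Y \<subseteq> ground M1 \<Longrightarrow> rk M1 Y = rk M (Y \<union> C1) - rk M C1"
    apply (rule is_minorE[OF m1]) by blast
  obtain C2 D2 where C2: "C2 \<subseteq> ground M1" and D2: "D2 \<subseteq> ground M1" and CD2: "C2 \<inter> D2 = {}"
    and g2: "ground M2 = ground M1 - (C2 \<union> D2)"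
    and r2: "\<And>Y. Y \<subseteq> ground M2 \<Longrightarrow> rk M2 Y = rk M1 (Y \<union> C2) - rk M1 C2"
    apply (rule is_minorE[OF m2]) by blast
  show ?thesis
  proof (rule is_minorI[of "C1 \<union> C2" M "D1 \<union> D2"])
    show "C1 \<union> C2 \<subseteq> ground M" "D1 \<union> D2 \<subseteq> ground M" "(C1 \<union> C2) \<inter> (D1 \<union> D2) = {}"
      "ground M2 = ground M - (C1 \<union> C2 \<union> (D1 \<union> D2))"
      using C1 D1 CD1 g1 C2 D2 CD2 g2 by blast+
    fix Y assume Y: "Y \<subseteq> ground M2"
    have Y1: "Y \<union> C2 \<subseteq> ground M1" using Y C2 g2 by blast
    have a: "rk M2 Y = rk M1 (Y \<union> C2) - rk M1 C2" using r2[OF Y] .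
    have b: "rk M1 (Y \<union> C2) = rk M (Y \<union> (C1 \<union> C2)) - rk M C1" using r1[OF Y1]
      by (simp add: Un_ac)
    have c: "rk M1 C2 = rk M (C1 \<union> C2) - rk M C1" using r1[OF C2] by (simp add: Un_ac)
    have YE: "Y \<union> (C1 \<union> C2) \<subseteq> ground M" using Y1 g1 C1 by blast
    have m1': "rk M C1 \<le> rk M (C1 \<union> C2)" using mE(3)[OF M, of C1 "C1 \<union> C2"] YE by blast
    have m2': "rk M (C1 \<union> C2) \<le> rk M (Y \<union> (C1 \<union> C2))" using mE(3)[OF M, of "C1 \<union> C2" "Y \<union> (C1 \<union> C2)"] YE by blast
    show "rk M2 Y = rk M (Y \<union> (C1 \<union> C2)) - rk M (C1 \<union> C2)" using a b c m1' m2' by simp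
  qed
qed

lemma minor_of_contr: assumes M: "matroid M" and mn: "is_minor N M"
  and e: "e \<in> ground M" "e \<notin> ground N"
  obtains "is_minor N (contr M e)" | "is_minor N (del M e)"
proof -
  obtain C D where C: "C \<subseteq> ground M" and D: "D \<subseteq> ground M" and CD: "C \<inter> D = {}"
    and gN: "ground N = ground M - (C \<union> D)"
    and rN: "\<And>Y. Y \<subseteq> ground N \<Longrightarrow> rk N Y = rk M (Y \<union> C) - rk M C"
    apply (rule is_minorE[OF mn]) by blast
  have "e \<in> C \<or> e \<in> D" using e gN by blast
  then show ?thesis
  proof
    assume eC: "e \<in> C"
    have "is_minor N (contr M e)"
    proof (rule is_minorI[of "C - {e}" _ D])
      show "C - {e} \<subseteq> ground (contr M e)" "D \<subseteq> ground (contr M e)" "(C - {e}) \<inter> D = {}"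
        "ground N = ground (contr M e) - (C - {e} \<union> D)"
        using C D CD gN eC by (auto simp: contr_simps)
      fix Y assume Y: "Y \<subseteq> ground N"
      have YE: "Y \<union> C \<subseteq> ground M" using Y C gN by blast
      have q1: "Y \<union> (C - {e}) \<union> {e} = Y \<union> C" "C - {e} \<union> {e} = C" using eC by blast+
      have m1: "rk M {e} \<le> rk M C" using mE(3)[OF M, of "{e}" C] C eC by blast
      have m2: "rk M C \<le> rk M (Y \<union> C)" using mE(3)[OF M, of C "Y \<union> C"] YE by blast
      show "rk N Y = rk (contr M e) (Y \<union> (C - {e})) - rk (contr M e) (C - {e})"
        using rN[OF Y] m1 m2 q1 by (simp add: contr_simps)
    qed
    then show ?thesis using that by blast
  next
    assume eD: "e \<in> D"
    have "is_minor N (del M e)"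
    proof (rule is_minorI[of C _ "D - {e}"])
      show "C \<subseteq> ground (del M e)" "D - {e} \<subseteq> ground (del M e)" "C \<inter> (D - {e}) = {}"
        "ground N = ground (del M e) - (C \<union> (D - {e}))"
        using C D CD gN eD by (auto simp: del_simps)
      fix Y assume Y: "Y \<subseteq> ground N"
      show "rk N Y = rk (del M e) (Y \<union> C) - rk (del M e) C"
        using rN[OF Y] by (simp add: del_simps)
    qed
    then show ?thesis using that by blast
  qed
qed


lemma contr_step:
  assumes M: "matroid M" and e: "e \<in> ground M" and a: "a \<subseteq> ground M" and ea: "e \<notin> a"
    and ra: "rk M (a \<union> {e}) = rk M a + 1" and Xa: "X \<subseteq> a"
  shows "same_restriction (contr M e) M X"
    and "\<And>b. b \<subseteq> ground (contr M e) \<Longrightarrow> conn M (b \<union> {e}) \<le> conn (contr M e) b + 1"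
proof -
  have eE: "{e} \<subseteq> ground M" using e by blast
  have re: "rk M {e} = 1"
  proof -
    have "rk M (a \<union> {e}) + rk M (a \<inter> {e}) \<le> rk M a + rk M {e}" using mE(4)[OF M a eE] .
    moreover have "a \<inter> {e} = {}" using ea by blast
    ultimately show ?thesis using rk_empty[OF M] rk_single[OF M e] ra by simp
  qed
  show "same_restriction (contr M e) M X"
    unfolding same_restriction_def
  proof (intro conjI allI impI)
    show "X \<subseteq> ground (contr M e)" using Xa a ea by (auto simp: contr_simps)
    show "X \<subseteq> ground M" using Xa a by blast
    fix Y assume Y: "Y \<subseteq> X"
    have YE: "Y \<subseteq> ground M" "Y \<union> {e} \<subseteq> ground M" using Y Xa a e by blast+
    have q: "(Y \<union> {e}) \<union> a = a \<union> {e}" "(Y \<union> {e}) \<inter> a = Y" using Y Xa ea by blast+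
    have "rk M ((Y \<union> {e}) \<union> a) + rk M ((Y \<union> {e}) \<inter> a) \<le> rk M (Y \<union> {e}) + rk M a"
      using mE(4)[OF M YE(2) a] .
    then have l: "rk M Y + 1 \<le> rk M (Y \<union> {e})" using q ra by simp
    have u: "rk M (Y \<union> {e}) \<le> rk M Y + 1" using rk_un[OF M YE(1) eE] re by simp
    show "rk (contr M e) Y = rk M Y" using l u re by (simp add: contr_simps)
  qed
  fix b assume b: "b \<subseteq> ground (contr M e)"
  let ?E = "ground M"
  have M1: "matroid (contr M e)" by (rule matroid_contr[OF M e])
  have bE: "b \<subseteq> ?E" "e \<notin> b" using b by (auto simp: contr_simps)
  have rc: "\<And>Z. Z \<subseteq> ?E \<Longrightarrow> rk (contr M e) Z + 1 = rk M (Z \<union> {e})"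
  proof -
    fix Z assume "Z \<subseteq> ?E"
    then have "rk M {e} \<le> rk M (Z \<union> {e})" using mE(3)[OF M, of "{e}" "Z \<union> {e}"] e by blast
    then show "rk (contr M e) Z + 1 = rk M (Z \<union> {e})" using re by (simp add: contr_simps)
  qed
  have c1: "conn (contr M e) b + rk (contr M e) (?E - {e}) = rk (contr M e) b + rk (contr M e) (?E - {e} - b)"
    using conn_eq[OF M1 b] by (simp add: contr_simps)
  have q1: "(?E - {e}) \<union> {e} = ?E" "(?E - {e} - b) \<union> {e} = ?E - b" using e bE by blast+
  have r1: "rk (contr M e) (?E - {e}) + 1 = rk M ?E" using rc[of "?E - {e}"] q1 by simp
  have r2: "rk (contr M e) (?E - {e} - b) + 1 = rk M (?E - b)" using rc[of "?E - {e} - b"] q1 by (metis Diff_subset order_trans)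
  have r3: "rk (contr M e) b + 1 = rk M (b \<union> {e})" using rc[OF bE(1)] .
  have beE: "b \<union> {e} \<subseteq> ?E" using bE e by blast
  have c2: "conn M (b \<union> {e}) + rk M ?E = rk M (b \<union> {e}) + rk M (?E - (b \<union> {e}))" using conn_eq[OF M beE] .
  have m: "rk M (?E - (b \<union> {e})) \<le> rk M (?E - b)" using mE(3)[OF M, of "?E - (b \<union> {e})" "?E - b"] by blast
  show "conn M (b \<union> {e}) \<le> conn (contr M e) b + 1" using c1 r1 r2 r3 c2 m by linarith
qed

lemma del_step:
  assumes M: "matroid M" and e: "e \<in> ground M" and a: "a \<subseteq> ground M" and ea: "e \<notin> a"
    and ra: "rk M (ground M - (a \<union> {e})) = rk M (ground M - a)" and Xa: "X \<subseteq> a"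
  shows "same_restriction (del M e) M X"
    and "\<And>b. b \<subseteq> ground (del M e) \<Longrightarrow> conn M (b \<union> {e}) \<le> conn (del M e) b + 1"
proof -
  show "same_restriction (del M e) M X" unfolding same_restriction_def del_simps using Xa a ea by blast
  let ?E = "ground M"
  fix b assume b: "b \<subseteq> ground (del M e)"
  have M1: "matroid (del M e)" by (rule matroid_del[OF M])
  have bE: "b \<subseteq> ?E" "e \<notin> b" using b by (auto simp: del_simps)
  have rEe: "rk M ?E \<le> rk M (?E - {e})"
  proof -
    have q: "(?E - {e}) \<union> (?E - a) = ?E" "(?E - {e}) \<inter> (?E - a) = ?E - (a \<union> {e})" using e ea by blast+
    have "rk M ((?E - {e}) \<union> (?E - a)) + rk M ((?E - {e}) \<inter> (?E - a)) \<le> rk M (?E - {e}) + rk M (?E - a)"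
      using mE(4)[OF M, of "?E - {e}" "?E - a"] by blast
    then show ?thesis using q ra by simp
  qed
  have c1: "conn (del M e) b + rk M (?E - {e}) = rk M b + rk M (?E - {e} - b)"
    using conn_eq[OF M1 b] by (simp add: del_simps)
  have beE: "b \<union> {e} \<subseteq> ?E" using bE e by blast
  have c2: "conn M (b \<union> {e}) + rk M ?E = rk M (b \<union> {e}) + rk M (?E - (b \<union> {e}))" using conn_eq[OF M beE] .
  have q2: "?E - (b \<union> {e}) = ?E - {e} - b" by blast
  have u: "rk M (b \<union> {e}) \<le> rk M b + 1" using rk_un[OF M bE(1), of "{e}"] rk_single[OF M e] e by simp
  have m: "rk M (?E - {e}) \<le> rk M ?E" using mE(3)[OF M, of "?E - {e}" ?E] by blast
  show "conn M (b \<union> {e}) \<le> conn (del M e) b + 1" using c1 c2 q2 u m rEe by simp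
qed

lemma tk_sub:
  assumes tg: "tangle N k (Tk k N)" and A: "A \<in> Tk k N" and YA: "Y \<subseteq> A" and c: "conn N Y < k - 1"
  shows "Y \<in> Tk k N"
proof (rule ccontr)
  assume n: "Y \<notin> Tk k N"
  have AN: "A \<subseteq> ground N" using A unfolding Tk_def separating_def by blast
  have "separating N (k - 1) Y" unfolding separating_def using YA AN c by blast
  then have "ground N - Y \<in> Tk k N" using tg n unfolding tangle_def by blast
  moreover have "A \<union> (ground N - Y) \<union> (ground N - Y) = ground N" using YA AN by blast
  ultimately show False using tg A unfolding tangle_def by blast
qed

lemma tk_un:
  assumes tg: "tangle N k (Tk k N)" and A: "A \<in> Tk k N" and B: "B \<in> Tk k N" and c: "conn N (A \<union> B) < k - 1"
  shows "A \<union> B \<in> Tk k N"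
proof (rule ccontr)
  assume n: "A \<union> B \<notin> Tk k N"
  have AN: "A \<subseteq> ground N" "B \<subseteq> ground N" using A B unfolding Tk_def separating_def by blast+
  have "separating N (k - 1) (A \<union> B)" unfolding separating_def using AN c by blast
  then have "ground N - (A \<union> B) \<in> Tk k N" using tg n unfolding tangle_def by blast
  moreover have "A \<union> B \<union> (ground N - (A \<union> B)) = ground N" using AN by blast
  ultimately show False using tg A B unfolding tangle_def by blast
qed


lemma same_restriction_trans:
  "same_restriction M' M1 X \<Longrightarrow> same_restriction M1 M X \<Longrightarrow> same_restriction M' M X"
  unfolding same_restriction_def by simp

lemma main:
  fixes k :: nat and N :: "'a matroid" and X :: "'a set"
  assumes tg: "tangle N k (Tk k N)"
  shows "matroid M \<Longrightarrow> is_minor N M \<Longrightarrow> X \<subseteq> ground M \<Longrightarrow> \<exists>Z\<in>TkMN k M N. X \<subseteq> Z \<Longrightarrow>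
    \<exists>M'. matroid M' \<and> is_minor M' M \<and> same_restriction M' M X \<and> is_minor N M'
     \<and> (\<exists>X'. X' \<in> TkMN k M' N \<and> X \<subseteq> X' \<and> ground M' = ground N \<union> X'
          \<and> conn M' X' = kappa M' k (TkMN k M' N) X
          \<and> kappa M' k (TkMN k M' N) X = kappa M k (TkMN k M N) X)"
proof (induction "card (ground M)" arbitrary: M rule: less_induct)
  case less
  note M = less.prems(1) and mn = less.prems(2) and XE = less.prems(3) and exZ = less.prems(4)
  define T where "T = TkMN k M N"
  define V where "V = {conn M Z | Z. Z \<in> T \<and> X \<subseteq> Z}"
  define K where "K = kappa M k T X"
  have Tmem: "\<And>Z. Z \<in> T \<longleftrightarrow> Z \<subseteq> ground M \<and> conn M Z < k - 1 \<and> Z \<inter> ground N \<in> Tk k N"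
    unfolding T_def TkMN_def by simp
  have exT: "\<exists>Z\<in>T. X \<subseteq> Z" using exZ T_def by simp
  have Vfin: "finite V"
    by (rule finite_subset[of _ "{..<k}"]) (auto simp: V_def Tmem)
  have Vne: "V \<noteq> {}" using exT V_def by auto
  have KV: "K = Min V" unfolding K_def kappa_def V_def using exT by simp
  have KinV: "K \<in> V" using Min_in[OF Vfin Vne] KV by simp
  have Kle: "\<And>Z. Z \<in> T \<Longrightarrow> X \<subseteq> Z \<Longrightarrow> K \<le> conn M Z"
    using Min_le[OF Vfin] KV unfolding V_def by blast
  define S where "S = {Z. Z \<in> T \<and> X \<subseteq> Z \<and> conn M Z = K}"
  have Sne: "S \<noteq> {}" using KinV unfolding V_def S_def by auto
  have "S \<subseteq> Pow (ground M)" using Tmem S_def by auto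
  then have Sfin: "finite S" by (rule finite_subset) (simp add: mE(1)[OF M])
  obtain a where aS: "a \<in> S" and amax: "\<And>Z. Z \<in> S \<Longrightarrow> card Z \<le> card a"
  proof -
    let ?m = "Max (card ` S)"
    have "?m \<in> card ` S" using Sfin Sne by (intro Max_in) auto
    then obtain a where "a \<in> S" "card a = ?m" by auto
    moreover have "\<And>Z. Z \<in> S \<Longrightarrow> card Z \<le> ?m" using Sfin by (intro Max_ge) auto
    ultimately show thesis using that by auto
  qed
  have aT: "a \<in> T" and Xa: "X \<subseteq> a" and Ka: "conn M a = K" using aS S_def by auto
  have aE: "a \<subseteq> ground M" and aK: "K < k - 1" and aN: "a \<inter> ground N \<in> Tk k N"
    using aT Ka Tmem by auto
  have NE: "ground N \<subseteq> ground M" by (rule is_minorE[OF mn]) blast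
  have fa: "finite a" using finite_subset[OF aE mE(1)[OF M]] .
  show ?case
  proof (cases "ground M \<subseteq> ground N \<union> a")
    case True
    have sr: "same_restriction M M X" using XE unfolding same_restriction_def by simp
    have g: "ground M = ground N \<union> a" using True NE aE by blast
    show ?thesis using M minor_refl[OF M] sr mn aT Xa g Ka unfolding K_def T_def by blast
  next
    case False
    then obtain e where eE: "e \<in> ground M" and eN: "e \<notin> ground N" and ea: "e \<notin> a" by blast
    let ?E = "ground M" let ?r = "rk M"
    have aeE: "a \<union> {e} \<subseteq> ?E" using aE eE by blast
    have big: "K < conn M (a \<union> {e})"
    proof (rule ccontr)
      assume "\<not> K < conn M (a \<union> {e})"
      then have le: "conn M (a \<union> {e}) \<le> K" by simp
      have "(a \<union> {e}) \<inter> ground N = a \<inter> ground N" using eN by blast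
      then have aeT: "a \<union> {e} \<in> T" using Tmem aeE le aK aN by auto
      then have "K \<le> conn M (a \<union> {e})" using Kle Xa by blast
      then have "a \<union> {e} \<in> S" using aeT Xa le S_def by auto
      then have "card (a \<union> {e}) \<le> card a" by (rule amax)
      moreover have "card (a \<union> {e}) = Suc (card a)" using ea fa by simp
      ultimately show False by simp
    qed
    have c1: "conn M a + ?r ?E = ?r a + ?r (?E - a)" using conn_eq[OF M aE] .
    have c2: "conn M (a \<union> {e}) + ?r ?E = ?r (a \<union> {e}) + ?r (?E - (a \<union> {e}))" using conn_eq[OF M aeE] .
    have m1: "?r a \<le> ?r (a \<union> {e})" using mE(3)[OF M, of a "a \<union> {e}"] aeE by blast
    have m2: "?r (a \<union> {e}) \<le> ?r a + 1" using rk_un[OF M aE, of "{e}"] rk_single[OF M eE] eE by simp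
    have m3: "?r (?E - (a \<union> {e})) \<le> ?r (?E - a)" using mE(3)[OF M, of "?E - (a \<union> {e})" "?E - a"] by blast
    have m4: "?r (?E - a) \<le> ?r (?E - (a \<union> {e})) + 1"
    proof -
      have "?E - a = (?E - (a \<union> {e})) \<union> {e}" using eE ea by blast
      then show ?thesis using rk_un[OF M, of "?E - (a \<union> {e})" "{e}"] rk_single[OF M eE] eE by simp
    qed
    have ra: "?r (a \<union> {e}) = ?r a + 1" and rb: "?r (?E - (a \<union> {e})) = ?r (?E - a)"
      using c1 c2 m1 m2 m3 m4 big Ka by linarith+
    obtain M1 where M1: "matroid M1" and m1M: "is_minor M1 M" and nM1: "is_minor N M1"
      and g1: "ground M1 = ground M - {e}" and sr1: "same_restriction M1 M X"
      and cb: "\<And>b. b \<subseteq> ground M1 \<Longrightarrow> conn M (b \<union> {e}) \<le> conn M1 b + 1"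
    proof -
      from minor_of_contr[OF M mn eE eN] show thesis
      proof cases
        case 1
        show thesis
          by (rule that[of "contr M e"], rule matroid_contr[OF M eE], rule minor_contr[OF M eE], rule 1,
              simp add: contr_simps, rule contr_step(1)[OF M eE aE ea ra Xa], rule contr_step(2)[OF M eE aE ea ra Xa])
      next
        case 2
        show thesis
          by (rule that[of "del M e"], rule matroid_del[OF M], rule minor_del[OF M eE], rule 2,
              simp add: del_simps, rule del_step(1)[OF M eE aE ea rb Xa], rule del_step(2)[OF M eE aE ea rb Xa])
      qed
    qed
    have cardlt: "card (ground M1) < card (ground M)"
      using g1 eE mE(1)[OF M] card_Diff1_less[of "ground M" e] by simp
    have X1: "X \<subseteq> ground M1" using Xa ea aE g1 by blast
    have aE1: "a \<subseteq> ground M1" using aE ea g1 by blast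
    have ca1: "conn M1 a \<le> conn M a" using conn_minor[OF M m1M aE] aE1 by (simp add: Int_absorb2)
    define T1 where "T1 = TkMN k M1 N"
    have T1mem: "\<And>Z. Z \<in> T1 \<longleftrightarrow> Z \<subseteq> ground M1 \<and> conn M1 Z < k - 1 \<and> Z \<inter> ground N \<in> Tk k N"
      unfolding T1_def TkMN_def by simp
    have aT1: "a \<in> T1" using T1mem aE1 ca1 Ka aK aN by auto
    have low: "K \<le> conn M1 b" if bT: "b \<in> T1" and Xb: "X \<subseteq> b" for b
    proof (rule ccontr)
      assume "\<not> K \<le> conn M1 b"
      then have lt: "conn M1 b < K" by simp
      have bE1: "b \<subseteq> ground M1" and bN: "b \<inter> ground N \<in> Tk k N" using bT T1mem by auto
      have beE: "b \<union> {e} \<subseteq> ?E" using bE1 g1 eE by blast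
      have cbe: "conn M (b \<union> {e}) \<le> K" using cb[OF bE1] lt by linarith
      define P where "P = a \<union> (b \<union> {e})"
      define Q where "Q = a \<inter> (b \<union> {e})"
      have sub: "conn M P + conn M Q \<le> conn M a + conn M (b \<union> {e})"
        unfolding P_def Q_def by (rule conn_submod[OF M aE beE])
      have QE: "Q \<subseteq> ?E" and PE: "P \<subseteq> ?E" using aE beE unfolding P_def Q_def by blast+
      have XQ: "X \<subseteq> Q" and XP: "X \<subseteq> P" using Xa Xb unfolding P_def Q_def by blast+
      have KQ: "K \<le> conn M Q"
      proof (rule ccontr)
        assume "\<not> K \<le> conn M Q"
        then have Qlt: "conn M Q < K" by simp
        have cN: "conn N (Q \<inter> ground N) \<le> conn M Q" by (rule conn_minor[OF M mn QE])
        have "Q \<inter> ground N \<in> Tk k N"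
          by (rule tk_sub[OF tg aN]) (use cN Qlt aK in \<open>auto simp: Q_def\<close>)
        then have "Q \<in> T" using Tmem QE Qlt aK by auto
        then have "K \<le> conn M Q" using Kle XQ by blast
        then show False using Qlt by simp
      qed
      have PK: "conn M P \<le> K" using sub Ka cbe KQ by linarith
      have PN: "P \<inter> ground N = (a \<inter> ground N) \<union> (b \<inter> ground N)" using eN unfolding P_def by blast
      have cNP: "conn N (P \<inter> ground N) \<le> conn M P" by (rule conn_minor[OF M mn PE])
      have "P \<inter> ground N \<in> Tk k N"
        unfolding PN by (rule tk_un[OF tg aN bN]) (use cNP PK aK PN in simp)
      then have PT: "P \<in> T" using Tmem PE PK aK by auto
      then have "K \<le> conn M P" using Kle XP by blast
      then have "P \<in> S" using PT XP PK S_def by auto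
      then have "card P \<le> card a" by (rule amax)
      moreover have "card a < card P"
      proof (rule psubset_card_mono)
        show "finite P" using finite_subset[OF PE mE(1)[OF M]] .
        show "a \<subset> P" using ea unfolding P_def by blast
      qed
      ultimately show False by simp
    qed
    have kap1: "kappa M1 k T1 X = K"
    proof -
      define V1 where "V1 = {conn M1 Z | Z. Z \<in> T1 \<and> X \<subseteq> Z}"
      have ex1: "\<exists>Z\<in>T1. X \<subseteq> Z" using aT1 Xa by blast
      have V1fin: "finite V1"
        by (rule finite_subset[of _ "{..<k}"]) (auto simp: V1_def T1mem)
      have V1ne: "V1 \<noteq> {}" using ex1 V1_def by auto
      have kv: "kappa M1 k T1 X = Min V1" unfolding kappa_def V1_def using ex1 by simp
      have "Min V1 \<le> conn M1 a" using Min_le[OF V1fin] aT1 Xa unfolding V1_def by blast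
      moreover have "Min V1 \<in> V1" using Min_in[OF V1fin V1ne] .
      then have "K \<le> Min V1" using low unfolding V1_def by auto
      ultimately show ?thesis using kv ca1 Ka by simp
    qed
    have ex1: "\<exists>Z\<in>TkMN k M1 N. X \<subseteq> Z" using aT1 Xa T1_def by blast
    obtain M' where M': "matroid M'" and m'1: "is_minor M' M1" and sr': "same_restriction M' M1 X"
      and nM': "is_minor N M'"
      and rest: "\<exists>X'. X' \<in> TkMN k M' N \<and> X \<subseteq> X' \<and> ground M' = ground N \<union> X'
          \<and> conn M' X' = kappa M' k (TkMN k M' N) X
          \<and> kappa M' k (TkMN k M' N) X = kappa M1 k (TkMN k M1 N) X"
      using less.hyps[OF cardlt M1 nM1 X1 ex1] by blast
    have "kappa M1 k (TkMN k M1 N) X = kappa M k (TkMN k M N) X"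
      using kap1 unfolding T1_def K_def T_def .
    then show ?thesis
      using M' minor_trans[OF M m1M m'1] same_restriction_trans[OF sr' sr1] nM' rest by metis
  qed
qed

theorem lemma6p4:
  fixes k :: nat and M N :: "'a matroid" and X :: "'a set"
  assumes "k \<ge> 1"
    and "matroid M" and "matroid N" and "is_minor N M"
    and "tangle N k (Tk k N)"
    and "X \<subseteq> ground M"
    and "\<exists>Z\<in>TkMN k M N. X \<subseteq> Z"
  shows "\<exists>M'. matroid M' \<and> is_minor M' M \<and> same_restriction M' M X \<and> is_minor N M'
     \<and> (\<exists>X'. X' \<in> TkMN k M' N \<and> X \<subseteq> X' \<and> ground M' = ground N \<union> X'
          \<and> conn M' X' = kappa M' k (TkMN k M' N) X
          \<and> kappa M' k (TkMN k M' N) X = kappa M k (TkMN k M N) X)"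
  by (rule main[OF assms(5) assms(2) assms(4) assms(6) assms(7)])

end
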